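(* Let $n$ be a nonnegative integer and $a,c\in\mathbb{C}$ such that all expressions below are defined (no lower parameter zero or a negative integer). Then \[ \left[{}_3F_2\!\left(\left.{a,a-c-n,c \atop \frac{a-n}{2},\frac{1+a-n}{2}}\right| \frac{1}{4}\right)\right]_n =\frac{(1+c-a)_n(1+c)_n}{n!\,(1-a)_n}\,{}_4F_3\!\left(\left.{-n,1+c+n,c,1 \atop \frac{1+c}{2},\frac{2+c}{2},1+c-a}\right| \frac{1}{4}\right). \]
   Context: For $a\in\mathbb{C}$, $(a)_0=1$ and $(a)_k=a(a+1)\cdots(a+k-1)$ for $k\ge1$. The hypergeometric series is ${}_rF_s\!\left(\left.{\alpha_1,\ldots,\alpha_r\atop \beta_1,\ldots,\beta_s}\right|z\right)=\sum_{k\ge0}\frac{(\alpha_1)_k\cdots(\alpha_r)_k}{k!(\beta_1)_k\cdots(\beta_s)_k}z^k$, with no lower parameter zero or a negative integer; it is a finite sum when an upper parameter is $-n$. The bracket $\left[{}_rF_s(\cdots|z)\right]_n$ denotes the sum of the first $n+1$ terms, $\sum_{k=0}^{n}\frac{(\alpha_1)_k\cdots(\alpha_r)_k}{k!(\beta_1)_k\cdots(\beta_s)_k}z^k$. *)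

theory Defs
  imports "HOL-Analysis.Analysis"
begin

definition hyp_term :: "complex list \<Rightarrow> complex list \<Rightarrow> complex \<Rightarrow> nat \<Rightarrow> complex" where
  "hyp_term as bs z k =
     (\<Prod>a\<leftarrow>as. pochhammer a k) / (fact k * (\<Prod>b\<leftarrow>bs. pochhammer b k)) * z ^ k"

definition hyp :: "complex list \<Rightarrow> complex list \<Rightarrow> complex \<Rightarrow> complex" where
  "hyp as bs z = (\<Sum>k. hyp_term as bs z k)"

definition hyp_trunc :: "complex list \<Rightarrow> complex list \<Rightarrow> complex \<Rightarrow> nat \<Rightarrow> complex" where
  "hyp_trunc as bs z n = (\<Sum>k\<le>n. hyp_term as bs z k)"

definition nonpos_int :: "complex \<Rightarrow> bool" where
  "nonpos_int b \<longleftrightarrow> (\<exists>m::nat. b = - of_nat m)"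

end

theory Submission
  imports Defs
begin


definition st :: "nat \<Rightarrow> complex \<Rightarrow> complex \<Rightarrow> nat \<Rightarrow> complex" where
 "st n a c k = pochhammer a k * pochhammer (a - c - of_nat n) k * pochhammer c k
     / (fact k * pochhammer (a - of_nat n) (2*k))"

definition Sm :: "nat \<Rightarrow> complex \<Rightarrow> complex \<Rightarrow> complex" where
 "Sm n a c = (\<Sum>k\<le>n. st n a c k)"

lemma poch_split: "pochhammer (a::complex) (Suc j) = pochhammer (a-1) (Suc j) + of_nat (Suc j) * pochhammer a j"
proof -
  have "pochhammer (a-1) (Suc j) = (a-1) * pochhammer a j" by (simp add: pochhammer_rec)
  moreover have "pochhammer a (Suc j) = pochhammer a j * (a + of_nat j)" by (simp add: pochhammer_Suc)
  ultimately show ?thesis by (simp add: algebra_simps)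
qed

lemma alg1:
  fixes x1 p b pb c pc n f A A1 P :: complex
  assumes "n \<noteq> 0" "f \<noteq> 0" "A \<noteq> 0" "A1 \<noteq> 0" "P \<noteq> 0"
  shows "(x1 + n*p)*(b*pb)*(c*pc)/((n*f)*(A*A1*P)) = x1*(b*pb)*(c*pc)/((n*f)*(A*A1*P)) + b*c/(A*A1)*(p*pb*pc/(f*P))"
  using assms by (simp add: field_simps)

lemma st_split:
  assumes nz: "pochhammer (a - of_nat (Suc (Suc m))) (2*Suc (Suc m)) \<noteq> 0" and jm: "j \<le> m"
  shows "st (Suc (Suc m)) a c (Suc j) = st (Suc m) (a-1) c (Suc j)
     + (a - c - of_nat (Suc (Suc m))) * c / ((a - of_nat (Suc (Suc m))) * (a - of_nat (Suc (Suc m)) + 1))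
       * st m a (c+1) j"
proof -
  define A where "A = a - of_nat (Suc (Suc m))"
  define B where "B = a - c - of_nat (Suc (Suc m))"
  have e1: "a - 1 - of_nat (Suc m) = A" by (simp add: A_def algebra_simps)
  have e2: "a - 1 - c - of_nat (Suc m) = B" by (simp add: B_def algebra_simps)
  have e3: "a - (c+1) - of_nat m = B + 1" by (simp add: B_def algebra_simps)
  have e4: "a - of_nat m = A + 2" by (simp add: A_def algebra_simps)
  have pA: "pochhammer A (2 * Suc j) = A * (A+1) * pochhammer (A+2) (2*j)"
    by (simp add: pochhammer_rec algebra_simps numeral_2_eq_2)
  have "pochhammer A (2 * Suc j) \<noteq> 0"
    using pochhammer_neq_0_mono[OF nz[folded A_def]] jm by simp
  hence nzA: "A \<noteq> 0" "A + 1 \<noteq> 0" "pochhammer (A+2) (2*j) \<noteq> 0" using pA by auto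
  have pB: "pochhammer B (Suc j) = B * pochhammer (B+1) j" by (simp add: pochhammer_rec)
  have pc: "pochhammer c (Suc j) = c * pochhammer (c+1) j" by (simp add: pochhammer_rec)
  have pA': "pochhammer A (Suc (Suc (2 * j))) = A * (A+1) * pochhammer (A+2) (2*j)"
    using pA by simp
  have fS: "fact (Suc j) = (1 + of_nat j) * (fact j :: complex)" by (simp add: fact_Suc)
  have nj: "(1 + of_nat j :: complex) \<noteq> 0" using of_nat_eq_0_iff[of "Suc j", where ?'a=complex] by (simp add: add.commute)
  have fj: "(fact j :: complex) \<noteq> 0" by simp
  define X1 where "X1 = pochhammer (a-1) (Suc j)"
  define pa where "pa = pochhammer a j"
  define pB1 where "pB1 = pochhammer (B+1) j"
  define pc1 where "pc1 = pochhammer (c+1) j"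
  define pA2 where "pA2 = pochhammer (A+2) (2*j)"
  define fj where "fj = (fact j :: complex)"
  have "st (Suc (Suc m)) a c (Suc j) = (X1 + (1 + of_nat j) * pa) * (B*pB1) * (c*pc1) / (((1 + of_nat j) * fj) * (A*(A+1)*pA2))"
    unfolding st_def A_def[symmetric] B_def[symmetric] X1_def pa_def pB1_def pc1_def pA2_def fj_def
    by (subst poch_split, simp add: pA' pB pc fS)
  moreover have "st (Suc m) (a-1) c (Suc j) = X1 * (B*pB1) * (c*pc1) / (((1 + of_nat j) * fj) * (A*(A+1)*pA2))"
    unfolding st_def e1 e2 X1_def pa_def pB1_def pc1_def pA2_def fj_def
    by (simp add: pA' pB pc fS)
  moreover have "st m a (c+1) j = pa * pB1 * pc1 / (fj * pA2)"
    unfolding st_def e3 e4 pa_def pB1_def pc1_def pA2_def fj_def by simp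
  moreover have "(X1 + (1 + of_nat j) * pa) * (B*pB1) * (c*pc1) / (((1 + of_nat j) * fj) * (A*(A+1)*pA2))
     = X1 * (B*pB1) * (c*pc1) / (((1 + of_nat j) * fj) * (A*(A+1)*pA2)) + B * c / (A * (A+1)) * (pa * pB1 * pc1 / (fj * pA2))"
    using alg1[OF nj fj nzA(1,2,3)] by (simp only: pA2_def fj_def)
  ultimately show ?thesis unfolding A_def B_def by simp
qed


lemma alg2:
  fixes sg c pc E D Q G f b J R1 :: complex
  assumes h1: "D*(c+2*J+1+R1) = (c+2*J+2)*E" and h2: "G*(b+J+R1) = (b+J+1)*Q"
    and f: "f \<noteq> 0" and r: "R1 \<noteq> 0"
  shows "- sg*c*pc*(E*(c+2*J+2+R1))*((b+J+1)*Q)/(R1*f) - (b-c)*(- sg*c*pc*E*Q/f)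
     + c*(b+J+R1)*(sg*pc*D*G/f)
   = - sg*c*pc*((c+2*J+1)*D)*((b+J+1)*Q)/(R1*f) - (sg*(c*pc*(c+J+1))*E*Q/f)"
  using h1 h2 f r apply (simp add: field_simps)
  by algebra


definition rt :: "nat \<Rightarrow> complex \<Rightarrow> complex \<Rightarrow> nat \<Rightarrow> complex" where
 "rt n b c k = (-1)^k * pochhammer c k * pochhammer (c + of_nat (2*k) + 1) (n-k) / fact (n-k)
      * pochhammer (b + of_nat k) (n-k)"

definition Rb :: "nat \<Rightarrow> complex \<Rightarrow> complex \<Rightarrow> complex" where
 "Rb n b c = (\<Sum>k\<le>n. rt n b c k)"

definition yt :: "nat \<Rightarrow> complex \<Rightarrow> complex \<Rightarrow> nat \<Rightarrow> complex" where
 "yt n b c j = (-1)^(Suc j) * pochhammer c (Suc j) * pochhammer (c + of_nat (2*j) + 1) (n - Suc j)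
      / fact (n - Suc j) * pochhammer (b + of_nat (Suc j)) (n - Suc j)"

lemma rt_step:
  "rt (j+r+2) b c (Suc j) - (b-c) * rt (j+r+1) (b+1) c (Suc j)
     + c*(b + of_nat (j+r) + 1) * rt (j+r) (b+1) (c+1) j
   = yt (j+r+2) b c j - yt (j+r+2) b c (Suc j)"
proof -
  define J where "J = (of_nat j :: complex)"
  define R1 where "R1 = (of_nat r + 1 :: complex)"
  define E where "E = pochhammer (c + 2*J + 3) r"
  define D where "D = pochhammer (c + 2*J + 2) r"
  define Q where "Q = pochhammer (b + J + 2) r"
  define G where "G = pochhammer (b + J + 1) r"
  define pc where "pc = pochhammer (c+1) j"
  define f where "f = (fact r :: complex)"
  define sg where "sg = ((-1)^j :: complex)"
  have h1: "D*(c+2*J+1+R1) = (c+2*J+2)*E"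
  proof -
    have "pochhammer (c + 2*J + 2) (Suc r) = D*(c+2*J+1+R1)"
      by (simp add: pochhammer_Suc D_def R1_def algebra_simps)
    moreover have "pochhammer (c + 2*J + 2) (Suc r) = (c+2*J+2)*E"
      by (simp add: pochhammer_rec E_def algebra_simps)
    ultimately show ?thesis by simp
  qed
  have h2: "G*(b+J+R1) = (b+J+1)*Q"
  proof -
    have "pochhammer (b + J + 1) (Suc r) = G*(b+J+R1)"
      by (simp add: pochhammer_Suc G_def R1_def algebra_simps)
    moreover have "pochhammer (b+J+1) (Suc r) = (b+J+1)*Q"
      by (simp add: pochhammer_rec Q_def algebra_simps)
    ultimately show ?thesis by simp
  qed
  have f: "f \<noteq> 0" by (simp add: f_def)
  have r: "R1 \<noteq> 0" unfolding R1_def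
    using of_nat_eq_0_iff[of "Suc r", where ?'a=complex] by (simp add: add.commute)
  have pc1: "pochhammer c (Suc j) = c * pc" by (simp add: pochhammer_rec pc_def)
  have pc2: "pochhammer c (Suc (Suc j)) = c * pc * (c+J+1)"
    by (subst pochhammer_Suc, simp add: pc1 J_def algebra_simps)
  have sg1: "(-1::complex)^(Suc j) = - sg" by (simp add: sg_def)
  have sg2: "(-1::complex)^(Suc (Suc j)) = sg" by (simp add: sg_def)
  have fr: "fact (Suc r) = R1 * f" by (simp add: fact_Suc R1_def f_def algebra_simps)
  have T1: "rt (j+r+2) b c (Suc j) = - sg * (c*pc) * (E*(c+2*J+2+R1)) / (R1*f) * ((b+J+1)*Q)"
  proof -
    have x1: "c + of_nat (2*Suc j) + 1 = c + 2*J + 3" by (simp add: J_def algebra_simps)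
    have x2: "b + of_nat (Suc j) = b + J + 1" by (simp add: J_def algebra_simps)
    have "pochhammer (c + 2*J + 3) (Suc r) = E*(c+2*J+2+R1)"
      by (simp add: pochhammer_Suc E_def R1_def algebra_simps)
    moreover have "pochhammer (b + J + 1) (Suc r) = (b+J+1)*Q"
      by (simp add: pochhammer_rec Q_def algebra_simps)
    moreover have "j + r + 2 - Suc j = Suc r" by simp
    ultimately show ?thesis unfolding rt_def x1 x2 sg1 pc1 by (simp add: R1_def f_def add.commute)
  qed
  have T2: "rt (j+r+1) (b+1) c (Suc j) = - sg * (c*pc) * E / f * Q"
  proof -
    have x1: "c + of_nat (2*Suc j) + 1 = c + 2*J + 3" by (simp add: J_def algebra_simps)
    have x2: "b + 1 + of_nat (Suc j) = b + J + 2" by (simp add: J_def algebra_simps)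
    have "j + r + 1 - Suc j = r" by simp
    then show ?thesis unfolding rt_def x1 x2 sg1 pc1 by (simp add: E_def Q_def f_def)
  qed
  have T3: "rt (j+r) (b+1) (c+1) j = sg * pc * D / f * G"
  proof -
    have x1: "c + 1 + of_nat (2*j) + 1 = c + 2*J + 2" by (simp add: J_def algebra_simps)
    have x2: "b + 1 + of_nat j = b + J + 1" by (simp add: J_def algebra_simps)
    have "j + r - j = r" by simp
    then show ?thesis unfolding rt_def x1 x2 by (simp add: D_def G_def f_def sg_def pc_def)
  qed
  have Y1: "yt (j+r+2) b c j = - sg * (c*pc) * ((c+2*J+1)*D) / (R1*f) * ((b+J+1)*Q)"
  proof -
    have x1: "c + of_nat (2*j) + 1 = c + 2*J + 1" by (simp add: J_def algebra_simps)
    have x2: "b + of_nat (Suc j) = b + J + 1" by (simp add: J_def algebra_simps)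
    have "pochhammer (c + 2*J + 1) (Suc r) = (c+2*J+1)*D"
      by (simp add: pochhammer_rec D_def algebra_simps)
    moreover have "pochhammer (b + J + 1) (Suc r) = (b+J+1)*Q"
      by (simp add: pochhammer_rec Q_def algebra_simps)
    moreover have "j + r + 2 - Suc j = Suc r" by simp
    ultimately show ?thesis unfolding yt_def x1 x2 sg1 pc1 by (simp add: R1_def f_def add.commute)
  qed
  have Y2: "yt (j+r+2) b c (Suc j) = sg * (c*pc*(c+J+1)) * E / f * Q"
  proof -
    have x1: "c + of_nat (2*Suc j) + 1 = c + 2*J + 3" by (simp add: J_def algebra_simps)
    have x2: "b + of_nat (Suc (Suc j)) = b + J + 2" by (simp add: J_def algebra_simps)
    have "j + r + 2 - Suc (Suc j) = r" by simp
    then show ?thesis unfolding yt_def x1 x2 sg2 pc2 by (simp add: E_def Q_def f_def)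
  qed
  have x3: "b + of_nat (j+r) + 1 = b + J + R1" by (simp add: J_def R1_def algebra_simps)
  show ?thesis unfolding T1 T2 T3 Y1 Y2 x3
    using h1 h2 f r apply (simp add: field_simps)
    by algebra
qed



lemma rt_zero:
  "rt (Suc N) b c 0 - (b-c) * rt N (b+1) c 0 + yt (Suc N) b c 0
     = pochhammer b (Suc N) * pochhammer c (Suc N) / fact (Suc N)"
proof -
  define P where "P = pochhammer (c+1) N"
  define Bq where "Bq = pochhammer (b+1) N"
  define F where "F = (fact N :: complex)"
  define NN where "NN = (of_nat N + 1 :: complex)"
  have F: "F \<noteq> 0" by (simp add: F_def)
  have N1: "NN \<noteq> 0" unfolding NN_def
    using of_nat_eq_0_iff[of "Suc N", where ?'a=complex] by (simp add: add.commute)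
  have f1: "pochhammer (c+1) (Suc N) = P*(c+NN)" by (simp add: pochhammer_Suc P_def NN_def)
  have f2: "pochhammer b (Suc N) = b*Bq" by (simp add: pochhammer_rec Bq_def)
  have f3: "fact (Suc N) = NN*F" by (simp add: fact_Suc NN_def F_def algebra_simps)
  have a1: "rt (Suc N) b c 0 = P*(c+NN)/(NN*F) * (b*Bq)"
    by (simp add: rt_def f1 f2 f3 del: fact_Suc)
  have a2: "rt N (b+1) c 0 = P / F * Bq"
    by (simp add: rt_def P_def Bq_def F_def)
  have a3: "yt (Suc N) b c 0 = - (c*P) / F * Bq"
    by (simp add: yt_def P_def Bq_def F_def pochhammer_rec)
  have a4: "pochhammer b (Suc N) * pochhammer c (Suc N) / fact (Suc N) = (b*Bq)*(c*P)/(NN*F)"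
    by (simp add: f2 f3 pochhammer_rec P_def Bq_def del: fact_Suc)
  show ?thesis unfolding a1 a2 a3 a4 using F N1 by (simp add: field_simps)
qed

lemma lin_comb:
  fixes R2 X0 X XL R1 Y0 Y bc K Z W0 W B :: complex
  shows "R2 = X0 + X + XL \<Longrightarrow> R1 = Y0 + Y \<Longrightarrow> X - bc*Y + K*Z = W0 - W \<Longrightarrow> W = XL
     \<Longrightarrow> X0 - bc*Y0 + W0 = B \<Longrightarrow> R2 = bc*R1 - K*Z + B"
proof -
  assume h1: "R2 = X0 + X + XL" and h2: "R1 = Y0 + Y" and h3: "X - bc*Y + K*Z = W0 - W"
    and h4: "W = XL" and h5: "X0 - bc*Y0 + W0 = B"
  have eX: "X = W0 - XL + bc*Y - K*Z" using h3 h4 by (simp add: algebra_simps)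
  have eX0: "X0 = B + bc*Y0 - W0" using h5 by (simp add: algebra_simps)
  show ?thesis unfolding h1 h2 eX eX0 by (simp add: algebra_simps)
qed

lemma Rb_rec:
  "Rb (Suc (Suc m)) b c = (b-c) * Rb (Suc m) (b+1) c - c*(b + of_nat m + 1) * Rb m (b+1) (c+1)
     + pochhammer b (Suc (Suc m)) * pochhammer c (Suc (Suc m)) / fact (Suc (Suc m))"
proof -
  have s1: "Rb (Suc (Suc m)) b c = rt (Suc (Suc m)) b c 0 + (\<Sum>j\<le>m. rt (Suc (Suc m)) b c (Suc j))
      + rt (Suc (Suc m)) b c (Suc (Suc m))"
    unfolding Rb_def by (subst sum.atMost_Suc_shift, subst sum.atMost_Suc, simp)
  have s2: "Rb (Suc m) (b+1) c = rt (Suc m) (b+1) c 0 + (\<Sum>j\<le>m. rt (Suc m) (b+1) c (Suc j))"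
    unfolding Rb_def by (subst sum.atMost_Suc_shift, simp)
  have st: "(\<Sum>j\<le>m. rt (Suc (Suc m)) b c (Suc j) - (b-c) * rt (Suc m) (b+1) c (Suc j)
         + c*(b + of_nat m + 1) * rt m (b+1) (c+1) j)
      = (\<Sum>j\<le>m. yt (Suc (Suc m)) b c j - yt (Suc (Suc m)) b c (Suc j))"
  proof (rule sum.cong[OF refl])
    fix j assume "j \<in> {..m}"
    hence jm: "j \<le> m" by simp
    have "rt (j+(m-j)+2) b c (Suc j) - (b-c) * rt (j+(m-j)+1) (b+1) c (Suc j)
     + c*(b + of_nat (j+(m-j)) + 1) * rt (j+(m-j)) (b+1) (c+1) j
       = yt (j+(m-j)+2) b c j - yt (j+(m-j)+2) b c (Suc j)" by (rule rt_step)
    moreover have "j + (m-j) = m" using jm by simp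
    ultimately show "rt (Suc (Suc m)) b c (Suc j) - (b-c) * rt (Suc m) (b+1) c (Suc j)
         + c*(b + of_nat m + 1) * rt m (b+1) (c+1) j
      = yt (Suc (Suc m)) b c j - yt (Suc (Suc m)) b c (Suc j)" by simp
  qed
  have tel: "(\<Sum>j\<le>m. yt (Suc (Suc m)) b c j - yt (Suc (Suc m)) b c (Suc j))
      = yt (Suc (Suc m)) b c 0 - yt (Suc (Suc m)) b c (Suc m)"
    by (rule sum_telescope)
  have last: "yt (Suc (Suc m)) b c (Suc m) = rt (Suc (Suc m)) b c (Suc (Suc m))"
    by (simp add: yt_def rt_def)
  have z: "rt (Suc (Suc m)) b c 0 - (b-c) * rt (Suc m) (b+1) c 0 + yt (Suc (Suc m)) b c 0
     = pochhammer b (Suc (Suc m)) * pochhammer c (Suc (Suc m)) / fact (Suc (Suc m))"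
    by (rule rt_zero)
  have dist: "(\<Sum>j\<le>m. rt (Suc (Suc m)) b c (Suc j) - (b-c) * rt (Suc m) (b+1) c (Suc j)
         + c*(b + of_nat m + 1) * rt m (b+1) (c+1) j)
     = (\<Sum>j\<le>m. rt (Suc (Suc m)) b c (Suc j)) - (b-c) * (\<Sum>j\<le>m. rt (Suc m) (b+1) c (Suc j))
         + c*(b + of_nat m + 1) * Rb m (b+1) (c+1)"
    unfolding Rb_def by (simp add: sum.distrib sum_subtractf sum_distrib_left)
  show ?thesis
    by (rule lin_comb[OF s1 s2 dist[symmetric, THEN trans, OF st[THEN trans, OF tel]] last z])
qed



lemma Sm_rec:
  assumes nz: "pochhammer (a - of_nat (Suc (Suc m))) (2*Suc (Suc m)) \<noteq> 0"
  shows "Sm (Suc (Suc m)) a c = Sm (Suc m) (a-1) c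
     + (a - c - of_nat (Suc (Suc m))) * c / ((a - of_nat (Suc (Suc m))) * (a - of_nat (Suc (Suc m)) + 1))
       * Sm m a (c+1) + st (Suc (Suc m)) a c (Suc (Suc m))"
proof -
  define K where "K = (a - c - of_nat (Suc (Suc m))) * c / ((a - of_nat (Suc (Suc m))) * (a - of_nat (Suc (Suc m)) + 1))"
  have s1: "Sm (Suc (Suc m)) a c = st (Suc (Suc m)) a c 0 + (\<Sum>j\<le>m. st (Suc (Suc m)) a c (Suc j))
      + st (Suc (Suc m)) a c (Suc (Suc m))"
    unfolding Sm_def by (subst sum.atMost_Suc_shift, subst sum.atMost_Suc, simp)
  have s2: "Sm (Suc m) (a-1) c = st (Suc m) (a-1) c 0 + (\<Sum>j\<le>m. st (Suc m) (a-1) c (Suc j))"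
    unfolding Sm_def by (subst sum.atMost_Suc_shift, simp)
  have s3: "(\<Sum>j\<le>m. st (Suc (Suc m)) a c (Suc j)) = (\<Sum>j\<le>m. st (Suc m) (a-1) c (Suc j)) + K * Sm m a (c+1)"
    unfolding Sm_def sum_distrib_left sum.distrib[symmetric]
    by (rule sum.cong[OF refl], unfold K_def, rule st_split[OF nz], simp)
  have s0: "st (Suc (Suc m)) a c 0 = st (Suc m) (a-1) c 0" by (simp add: st_def)
  show ?thesis unfolding K_def[symmetric] s1 s2 s3 s0 by (simp add: algebra_simps)
qed

lemma poch_2n_split:
  "pochhammer (A::complex) (2*Suc (Suc m)) = A * (A+1) * pochhammer (A+2) (2*m) * ((A + 2 + of_nat (2*m)) * (A + 3 + of_nat (2*m)))"
proof -
  have "pochhammer A (2*Suc (Suc m)) = pochhammer A (Suc (Suc (2*m)) + 2)" by (simp add: algebra_simps)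
  also have "... = pochhammer A (Suc (Suc (2*m))) * pochhammer (A + of_nat (Suc (Suc (2*m)))) 2"
    by (rule pochhammer_product')
  also have "pochhammer A (Suc (Suc (2*m))) = A * (A+1) * pochhammer (A+2) (2*m)"
    by (simp add: pochhammer_rec algebra_simps numeral_2_eq_2)
  also have "pochhammer (A + of_nat (Suc (Suc (2*m)))) 2 = (A + 2 + of_nat (2*m)) * (A + 3 + of_nat (2*m))"
    by (simp add: numeral_2_eq_2 pochhammer_rec algebra_simps)
  finally show ?thesis .
qed

lemma boundary:
  assumes nz: "pochhammer (a - of_nat n) (2*n) \<noteq> 0"
  shows "pochhammer (1-a) n * st n a c n = pochhammer (1+c-a) n * pochhammer c n / fact n"
proof -
  have p1: "pochhammer (a - of_nat n) (2*n) = pochhammer (a - of_nat n) n * pochhammer a n"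
    using pochhammer_product'[of "a - of_nat n" n n] by (simp add: mult_2)
  have p2: "pochhammer (1-a) n = (-1)^n * pochhammer (a - of_nat n) n"
    using pochhammer_minus[of "a-1" n] by (simp add: algebra_simps)
  have p3: "pochhammer (a - c - of_nat n) n = (-1)^n * pochhammer (1+c-a) n"
    using pochhammer_minus[of "1+c-a + of_nat n - 1" n] by (simp add: algebra_simps)
  have nz1: "pochhammer (a - of_nat n) n \<noteq> 0" "pochhammer a n \<noteq> 0" using nz p1 by auto
  have sq: "((-1::complex)^n) * (-1)^n = 1" by (simp add: power_mult_distrib[symmetric])
  show ?thesis unfolding st_def p1 p2 p3 using nz1 sq
    by (simp add: field_simps)
qed



lemma main_ind:
  "pochhammer (a - of_nat n) (2*n) \<noteq> 0 \<Longrightarrow> pochhammer (1-a) n * Sm n a c = Rb n (1+c-a) c"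
proof (induction n arbitrary: a c rule: less_induct)
  case (less n)
  consider "n = 0" | "n = 1" | m where "n = Suc (Suc m)"
    by (metis One_nat_def not0_implies_Suc)
  then show ?case
  proof cases
    case 1
    then show ?thesis by (simp add: Sm_def Rb_def st_def rt_def)
  next
    case 2
    have "pochhammer (a - 1) 2 \<noteq> 0" using less.prems 2 by simp
    hence nz: "a - 1 \<noteq> 0" "a \<noteq> 0" by (auto simp: numeral_2_eq_2 pochhammer_rec)
    have "Sm 1 a c = 1 + a*(a-c-1)*c/((a-1)*a)"
      by (simp add: Sm_def st_def numeral_2_eq_2 pochhammer_rec)
    moreover have "Rb 1 (1+c-a) c = (c+1)*(1+c-a) - c"
      by (simp add: Rb_def rt_def)
    moreover have "(1-a) * (1 + a*(a-c-1)*c/((a-1)*a)) = (c+1)*(1+c-a) - c"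
    proof -
      have "a*(a-c-1)*c/((a-1)*a) = (a-c-1)*c/(a-1)" using nz by simp
      moreover have "(1-a) * (1 + (a-c-1)*c/(a-1)) = (1-a) - (a-c-1)*c"
        using nz(1) by (simp add: field_simps)
      ultimately show ?thesis by (simp add: algebra_simps)
    qed
    ultimately show ?thesis using 2 by simp
  next
    case 3
    define A where "A = a - of_nat (Suc (Suc m))"
    have nz: "pochhammer A (2*Suc (Suc m)) \<noteq> 0" using less.prems 3 A_def by simp
    have nzs: "A \<noteq> 0" "A + 1 \<noteq> 0" "pochhammer (A+2) (2*m) \<noteq> 0"
      using nz unfolding poch_2n_split by auto
    have nz1: "pochhammer (a - 1 - of_nat (Suc m)) (2 * Suc m) \<noteq> 0"
    proof -
      have "a - 1 - of_nat (Suc m) = A" by (simp add: A_def algebra_simps)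
      moreover have "pochhammer A (2 * Suc m) \<noteq> 0"
        using pochhammer_neq_0_mono[OF nz] by simp
      ultimately show ?thesis by simp
    qed
    have nz2: "pochhammer (a - of_nat m) (2 * m) \<noteq> 0"
    proof -
      have "a - of_nat m = A + 2" by (simp add: A_def algebra_simps)
      thus ?thesis using nzs by simp
    qed
    have IH1: "pochhammer (1-(a-1)) (Suc m) * Sm (Suc m) (a-1) c = Rb (Suc m) (1+c-(a-1)) c"
      using less.IH[of "Suc m" "a-1" c] nz1 3 by simp
    have IH2: "pochhammer (1-a) m * Sm m a (c+1) = Rb m (1+(c+1)-a) (c+1)"
      using less.IH[of m a "c+1"] nz2 3 by simp
    have q1: "pochhammer (1-a) (Suc (Suc m)) = (1-a) * pochhammer (1-(a-1)) (Suc m)"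
      by (simp add: pochhammer_rec algebra_simps)
    have q2: "pochhammer (1-a) (Suc (Suc m)) = pochhammer (1-a) m * (A * (A+1))"
      by (simp add: pochhammer_Suc A_def algebra_simps)
    have kk: "pochhammer (1-a) (Suc (Suc m)) * ((a - c - of_nat (Suc (Suc m))) * c / ((a - of_nat (Suc (Suc m))) * (a - of_nat (Suc (Suc m)) + 1)))
       = c * (a - c - of_nat (Suc (Suc m))) * pochhammer (1-a) m"
    proof -
      define B where "B = a - c - of_nat (Suc (Suc m))"
      have nzAA: "A*(A+1) \<noteq> 0" using nzs by simp
      have "pochhammer (1-a) m * (A*(A+1)) * (B * c / (A*(A+1))) = pochhammer (1-a) m * ((A*(A+1)) * (B * c / (A*(A+1))))"
        by (simp only: mult.assoc)
      also have "(A*(A+1)) * (B * c / (A*(A+1))) = B*c" using nzAA by simp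
      finally show ?thesis unfolding q2 A_def[symmetric] B_def[symmetric] by (simp add: ac_simps)
    qed
    have bd: "pochhammer (1-a) (Suc (Suc m)) * st (Suc (Suc m)) a c (Suc (Suc m))
       = pochhammer (1+c-a) (Suc (Suc m)) * pochhammer c (Suc (Suc m)) / fact (Suc (Suc m))"
      by (rule boundary) (use less.prems 3 in simp)
    have rr: "Rb (Suc (Suc m)) (1+c-a) c = (1-a) * Rb (Suc m) (1+c-a+1) c
       - c*(1+c-a + of_nat m + 1) * Rb m (1+c-a+1) (c+1)
       + pochhammer (1+c-a) (Suc (Suc m)) * pochhammer c (Suc (Suc m)) / fact (Suc (Suc m))"
      using Rb_rec[of m "1+c-a" c] by simp
    have e1: "1+c-(a-1) = 1+c-a+1" "1+(c+1)-a = 1+c-a+1" by (simp_all add: algebra_simps)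
    have "pochhammer (1-a) n * Sm n a c
      = (1-a) * (pochhammer (1-(a-1)) (Suc m) * Sm (Suc m) (a-1) c)
        + (pochhammer (1-a) (Suc (Suc m)) * ((a - c - of_nat (Suc (Suc m))) * c / ((a - of_nat (Suc (Suc m))) * (a - of_nat (Suc (Suc m)) + 1)))) * Sm m a (c+1)
        + pochhammer (1-a) (Suc (Suc m)) * st (Suc (Suc m)) a c (Suc (Suc m))"
      unfolding 3 Sm_rec[OF less.prems[unfolded 3]] q1[symmetric] by (simp add: algebra_simps q1)
    also have "... = (1-a) * Rb (Suc m) (1+c-a+1) c + c * (a - c - of_nat (Suc (Suc m))) * Rb m (1+c-a+1) (c+1)
        + pochhammer (1+c-a) (Suc (Suc m)) * pochhammer c (Suc (Suc m)) / fact (Suc (Suc m))"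
      unfolding kk bd mult.assoc[of "c * _"] IH1 IH2[unfolded e1] e1 by simp
    also have "... = Rb n (1+c-a) c" unfolding 3 rr by (simp add: algebra_simps)
    finally show ?thesis .
  qed
qed



lemma not_nonpos_poch: "\<not> nonpos_int z \<Longrightarrow> pochhammer z k \<noteq> 0"
  unfolding nonpos_int_def pochhammer_eq_0_iff by auto

lemma poch_double': "pochhammer (z::complex) k * pochhammer (z + 1/2) k = pochhammer (2*z) (2*k) / 4^k"
proof -
  have "pochhammer (2*z) (2*k) = of_nat (2^(2*k)) * pochhammer z k * pochhammer (z+1/2) k"
    by (rule pochhammer_double)
  moreover have "(of_nat (2^(2*k)) :: complex) = 4^k" by (simp add: power_mult)
  ultimately show ?thesis by simp
qed

lemma lhs_term:
  "hyp_term [a, a - c - of_nat n, c] [(a - of_nat n) / 2, (1 + a - of_nat n) / 2] (1/4) k = st n a c k"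
proof -
  have "pochhammer ((a - of_nat n) / 2) k * pochhammer ((1 + a - of_nat n) / 2) k
      = pochhammer (a - of_nat n) (2*k) / 4^k"
  proof -
    have e1: "(a - of_nat n)/2 + 1/2 = (1 + a - of_nat n) / 2" by (simp add: field_simps)
    have e2: "2 * ((a - of_nat n)/2) = a - of_nat n" by simp
    show ?thesis using poch_double'[of "(a - of_nat n)/2" k] unfolding e1 e2 .
  qed
  then show ?thesis unfolding hyp_term_def st_def
    by (simp add: field_simps power_one_over)
qed

lemma alg3:
  fixes Bk Bt C2 Ct Cn Cnk M F Fn Fk pc Pa sg q :: complex
  assumes "Cn*Cnk = C2*Ct" "M*F = sg*Fn" "Bk \<noteq> 0" "C2 \<noteq> 0" "Pa \<noteq> 0" "F \<noteq> 0" "Fn \<noteq> 0" "Fk \<noteq> 0" "q \<noteq> 0"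
  shows "(Bk*Bt)*Cn/(Fn*Pa) * ((M*(Cnk*(pc*Fk)))/(Fk*((C2/q)*Bk)) * (1/q)) = sg*pc*Ct/F*Bt/Pa"
  using assms by (simp add: field_simps)

lemma rhs_term:
  assumes k: "k \<le> n" and nb: "pochhammer (1+c-a) k \<noteq> 0" and nc: "pochhammer (1+c) (2*k) \<noteq> 0"
    and na: "pochhammer (1-a) n \<noteq> 0"
  shows "pochhammer (1 + c - a) n * pochhammer (1 + c) n / (fact n * pochhammer (1 - a) n)
     * hyp_term [- of_nat n, 1 + c + of_nat n, c, 1] [(1 + c) / 2, (2 + c) / 2, 1 + c - a] (1/4) k
     = rt n (1+c-a) c k / pochhammer (1-a) n"
proof -
  define b where "b = 1+c-a"
  have d1: "pochhammer ((1+c)/2) k * pochhammer ((2+c)/2) k = pochhammer (1+c) (2*k) / 4^k"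
  proof -
    have e1: "(1+c)/2 + 1/2 = (2+c)/2" by (simp add: field_simps)
    have e2: "2 * ((1+c)/2) = 1+c" by simp
    show ?thesis using poch_double'[of "(1+c)/2" k] unfolding e1 e2 .
  qed
  have d3: "pochhammer b n = pochhammer b k * pochhammer (b + of_nat k) (n-k)"
    using pochhammer_product[OF k, of b] by simp
  have d4: "pochhammer (1+c) n * pochhammer (1+c + of_nat n) k = pochhammer (1+c) (2*k) * pochhammer (c + of_nat (2*k) + 1) (n-k)"
  proof -
    have "pochhammer (1+c) (n+k) = pochhammer (1+c) n * pochhammer (1+c + of_nat n) k"
      by (rule pochhammer_product')
    moreover have "pochhammer (1+c) (2*k + (n-k)) = pochhammer (1+c) (2*k) * pochhammer (1+c + of_nat (2*k)) (n-k)"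
      by (rule pochhammer_product')
    moreover have "2*k + (n-k) = n+k" using k by simp
    ultimately show ?thesis by (simp add: algebra_simps)
  qed
  have d5: "pochhammer (- of_nat n) k * fact (n-k) = (-1)^k * (fact n :: complex)"
  proof -
    have "pochhammer (- of_nat n :: complex) k = (-1)^k * pochhammer (of_nat n - of_nat k + 1) k"
      by (rule pochhammer_minus)
    moreover have "(of_nat n - of_nat k + 1 :: complex) = 1 + of_nat (n-k)" using k by (simp add: of_nat_diff)
    moreover have "pochhammer (1::complex) ((n-k) + k) = pochhammer 1 (n-k) * pochhammer (1 + of_nat (n-k)) k"
      by (rule pochhammer_product')
    moreover have "(n-k) + k = n" using k by simp
    ultimately show ?thesis by (simp add: pochhammer_fact algebra_simps)
  qed
  have rt: "rt n b c k = (-1)^k * pochhammer c k * pochhammer (c + of_nat (2*k) + 1) (n-k) / fact (n-k)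
      * pochhammer (b + of_nat k) (n-k)" by (simp add: rt_def)
  have ht: "hyp_term [- of_nat n, 1 + c + of_nat n, c, 1] [(1 + c) / 2, (2 + c) / 2, 1 + c - a] (1/4) k
     = (pochhammer (- of_nat n) k * (pochhammer (1+c + of_nat n) k * (pochhammer c k * fact k)))
        / (fact k * ((pochhammer (1+c) (2*k) / 4^k) * pochhammer b k)) * (1/4^k)"
  proof -
    have d1': "\<And>X. pochhammer ((1+c)/2) k * (pochhammer ((2+c)/2) k * X) = (pochhammer (1+c) (2*k) / 4^k) * X"
      using d1 by (metis mult.assoc)
    show ?thesis unfolding hyp_term_def b_def[symmetric]
      by (simp add: pochhammer_fact[symmetric] d1' power_one_over del: times_divide_eq_left times_divide_eq_right)
  qed
  show ?thesis unfolding ht unfolding b_def[symmetric] rt d3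
    by (rule alg3[OF d4 d5 nb[folded b_def] nc na]) simp_all
qed



theorem mainTheorem15:
  fixes n :: nat and a c :: complex
  assumes "\<not> nonpos_int ((a - of_nat n) / 2)"
      and "\<not> nonpos_int ((1 + a - of_nat n) / 2)"
      and "\<not> nonpos_int ((1 + c) / 2)"
      and "\<not> nonpos_int ((2 + c) / 2)"
      and "\<not> nonpos_int (1 + c - a)"
      and "pochhammer (1 - a) n \<noteq> 0"
  shows "hyp_trunc [a, a - c - of_nat n, c] [(a - of_nat n) / 2, (1 + a - of_nat n) / 2] (1/4) n
       = pochhammer (1 + c - a) n * pochhammer (1 + c) n / (fact n * pochhammer (1 - a) n)
         * hyp [- of_nat n, 1 + c + of_nat n, c, 1] [(1 + c) / 2, (2 + c) / 2, 1 + c - a] (1/4)"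
proof -
  have nzA: "pochhammer (a - of_nat n) (2*n) \<noteq> 0"
  proof -
    have e1: "(a - of_nat n)/2 + 1/2 = (1 + a - of_nat n) / 2" by (simp add: field_simps)
    have e2: "2 * ((a - of_nat n)/2) = a - of_nat n" by simp
    have "pochhammer ((a - of_nat n) / 2) n * pochhammer ((1 + a - of_nat n) / 2) n = pochhammer (a - of_nat n) (2*n) / 4^n"
      using poch_double'[of "(a - of_nat n)/2" n] unfolding e1 e2 .
    moreover have "pochhammer ((a - of_nat n) / 2) n \<noteq> 0" "pochhammer ((1 + a - of_nat n) / 2) n \<noteq> 0"
      using not_nonpos_poch assms(1,2) by auto
    ultimately show ?thesis by auto
  qed
  have nc: "pochhammer (1+c) (2*k) \<noteq> 0" for k
  proof -
    have e1: "(1+c)/2 + 1/2 = (2+c)/2" by (simp add: field_simps)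
    have e2: "2 * ((1+c)/2) = 1+c" by simp
    have "pochhammer ((1+c)/2) k * pochhammer ((2+c)/2) k = pochhammer (1+c) (2*k) / 4^k"
      using poch_double'[of "(1+c)/2" k] unfolding e1 e2 .
    moreover have "pochhammer ((1+c)/2) k \<noteq> 0" "pochhammer ((2+c)/2) k \<noteq> 0"
      using not_nonpos_poch assms(3,4) by auto
    ultimately show ?thesis by auto
  qed
  have nb: "pochhammer (1+c-a) k \<noteq> 0" for k using not_nonpos_poch assms(5) by auto
  have L: "hyp_trunc [a, a - c - of_nat n, c] [(a - of_nat n) / 2, (1 + a - of_nat n) / 2] (1/4) n = Sm n a c"
    unfolding hyp_trunc_def Sm_def lhs_term ..
  have M: "Sm n a c = Rb n (1+c-a) c / pochhammer (1-a) n"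
    using main_ind[OF nzA, of c] assms(6) by (simp add: field_simps)
  have H: "hyp [- of_nat n, 1 + c + of_nat n, c, 1] [(1 + c) / 2, (2 + c) / 2, 1 + c - a] (1/4)
     = (\<Sum>k\<le>n. hyp_term [- of_nat n, 1 + c + of_nat n, c, 1] [(1 + c) / 2, (2 + c) / 2, 1 + c - a] (1/4) k)"
    unfolding hyp_def
  proof (rule suminf_finite)
    show "finite {..n}" by simp
    fix k assume "k \<notin> {..n}"
    hence "n < k" by simp
    hence "pochhammer (- of_nat n :: complex) k = 0" by (simp add: pochhammer_of_nat_eq_0_iff)
    thus "hyp_term [- of_nat n, 1 + c + of_nat n, c, 1] [(1 + c) / 2, (2 + c) / 2, 1 + c - a] (1/4) k = 0"
      unfolding hyp_term_def by simp
  qed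
  show ?thesis
    unfolding L M H sum_distrib_left Rb_def sum_divide_distrib
    by (rule sum.cong[OF refl], rule rhs_term[OF _ nb nc assms(6), symmetric]) simp
qed

end
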